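(* Let $R$ be an associative ring. Then $R$ is both left locally unital and right locally unital if and only if for every $n\in\mathbb{N}$ and all $r_1,\ldots,r_n \in R$ there is an idempotent $e \in R$ with $e r_i = r_i e = r_i$ for all $i \in\{1,\ldots,n\}$.
   Context: Rings are associative, not necessarily unital. $R$ is called left (right) locally unital if for every $n \in \mathbb{N}$ and all $r_1,\ldots,r_n\in R$ there is an idempotent $e\in R$ (i.e. $e^2=e$) such that $e r_i = r_i$ (respectively $r_i e = r_i$) for all $i\in\{1,\ldots,n\}$. *)

theory Defs
  imports Main
begin

(* Rings are associative, not necessarily unital: type class ring (no 1). *)

definition idempotent :: "'a::ring \<Rightarrow> bool" where
  "idempotent e \<longleftrightarrow> e * e = e"

definition left_locally_unital :: "'a::ring itself \<Rightarrow> bool" where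
  "left_locally_unital _ \<longleftrightarrow>
     (\<forall>rs :: 'a list. \<exists>e. idempotent e \<and> (\<forall>r\<in>set rs. e * r = r))"

definition right_locally_unital :: "'a::ring itself \<Rightarrow> bool" where
  "right_locally_unital _ \<longleftrightarrow>
     (\<forall>rs :: 'a list. \<exists>e. idempotent e \<and> (\<forall>r\<in>set rs. r * e = r))"

end

theory Submission
  imports Defs
begin

theorem mainTheorem7:
  shows "(left_locally_unital TYPE('a::ring) \<and> right_locally_unital TYPE('a)) \<longleftrightarrow>
    (\<forall>rs :: 'a list. \<exists>e. idempotent e \<and> (\<forall>r\<in>set rs. e * r = r \<and> r * e = r))"
proof
  assume H: "left_locally_unital TYPE('a::ring) \<and> right_locally_unital TYPE('a)"
  show "\<forall>rs :: 'a list. \<exists>e. idempotent e \<and> (\<forall>r\<in>set rs. e * r = r \<and> r * e = r)"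
  proof
    fix rs :: "'a list"
    obtain e :: 'a where e: "e * e = e" "\<forall>r\<in>set rs. e * r = r"
      using H unfolding left_locally_unital_def idempotent_def by blast
    obtain f :: 'a where f: "f * f = f" "\<forall>r\<in>set (e # rs). r * f = r"
      using H unfolding right_locally_unital_def idempotent_def by blast
    have ef: "e * f = e" using f by simp
    define g where "g = e + f - f * e"
    have ge: "g * e = e" unfolding g_def
      by (simp add: algebra_simps e(1) mult.assoc[symmetric])
    have gf: "g * f = g" unfolding g_def
      by (simp add: algebra_simps ef f(1) mult.assoc)
    have "g * g = g * e + g * f - g * f * e" unfolding g_def
      by (simp add: algebra_simps mult.assoc)
    also have "\<dots> = g" using ge gf by simp
    finally have gg: "g * g = g" .
    have "\<forall>r\<in>set rs. g * r = r \<and> r * g = r"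
    proof
      fix r assume r: "r \<in> set rs"
      have er: "e * r = r" using e r by blast
      have rf: "r * f = r" using f r by simp
      have "g * r = e * r + f * r - f * (e * r)" unfolding g_def
        by (simp add: algebra_simps mult.assoc)
      hence 1: "g * r = r" using er by simp
      have "r * g = r * e + r * f - (r * f) * e" unfolding g_def
        by (simp add: algebra_simps mult.assoc)
      hence 2: "r * g = r" using rf by simp
      show "g * r = r \<and> r * g = r" using 1 2 by simp
    qed
    thus "\<exists>e. idempotent e \<and> (\<forall>r\<in>set rs. e * r = r \<and> r * e = r)"
      using gg unfolding idempotent_def by blast
  qed
next
  assume "\<forall>rs :: 'a list. \<exists>e. idempotent e \<and> (\<forall>r\<in>set rs. e * r = r \<and> r * e = r)"
  thus "left_locally_unital TYPE('a::ring) \<and> right_locally_unital TYPE('a)"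
    unfolding left_locally_unital_def right_locally_unital_def by meson
qed

end
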